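(* Let $Q=\Diamond abcd$ be a convex quadrilateral with vertices $a,b,c,d$ in clockwise order, such that the diagonal $\overline{ac}$ is horizontal, $|ac|=1$, and $1$ is the diameter of $Q$. Let $\Box efgh$ be the smallest axis-parallel rectangle containing $Q$, with horizontal side length $1$ and vertical side length $W$, where $\frac{2}{\sqrt5}<W\le 1$; $a$ lies on its left side $\overline{gh}$, $b$ on its top side $\overline{he}$, $c$ on its right side $\overline{ef}$ and $d$ on its bottom side $\overline{fg}$. Assume that $\overline{ac}$ lies on or below the horizontal line through the midpoints of the left and right sides, and that $b$ lies to the right of the midpoint of the top side. Let $m_1$ be the midpoint of $\overline{ab}$ and let $z$ be the point where the perpendicular bisector of $\overline{ab}$, starting at $m_1$ and going into $Q$, meets the boundary of $Q$. If $z$ lies on the edge $\overline{cd}$, then $|m_1z|\ge \frac W2$. *)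

theory Defs
  imports "HOL-Analysis.Analysis"
begin

text \<open>Points of the plane are pairs of reals (x, y). cross u v is the z-component
  of the cross product; a strictly negative turn means a clockwise (right) turn.\<close>

definition cross :: "real \<times> real \<Rightarrow> real \<times> real \<Rightarrow> real" where
  "cross u v = fst u * snd v - snd u * fst v"

definition right_turn :: "real \<times> real \<Rightarrow> real \<times> real \<Rightarrow> real \<times> real \<Rightarrow> bool" where
  "right_turn p q r \<longleftrightarrow> cross (q - p) (r - q) < 0"

definition convex_quad_cw :: "real \<times> real \<Rightarrow> real \<times> real \<Rightarrow> real \<times> real \<Rightarrow> real \<times> real \<Rightarrow> bool" where
  "convex_quad_cw a b c d \<longleftrightarrow>
     right_turn a b c \<and> right_turn b c d \<and> right_turn c d a \<and> right_turn d a b"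

text \<open>Right-hand normal of a vector (rotation by -90 degrees); for a clockwise polygon
  it points from the edge into the polygon.\<close>
definition rnormal :: "real \<times> real \<Rightarrow> real \<times> real" where
  "rnormal v = (snd v, - fst v)"

end

theory Submission
  imports Defs
begin

lemma key_poly:
  fixes W A hh k pq :: real
  assumes "0 \<le> hh" "hh \<le> W/2" "0 < W" "W \<le> 1" "0 \<le> A"
    and "k = 1 - pq" "pq\<^sup>2 + W\<^sup>2 \<le> 1" "4*A - 2*pq \<ge> 0"
  shows "(W*A + hh*k)\<^sup>2 \<ge> W\<^sup>2 * (A\<^sup>2 + hh\<^sup>2)"
proof -
  have pq1: "pq < 1" using assms by (smt (verit) power2_less_0 zero_less_power2 one_power2 power2_le_imp_le)
  have k0: "k > 0" using pq1 assms by simp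
  have G: "2*W*A*k + hh*(k\<^sup>2 - W\<^sup>2) \<ge> 0"
  proof (cases "k\<^sup>2 \<ge> W\<^sup>2")
    case True
    then show ?thesis using assms k0 by (simp add: mult_nonneg_nonneg)
  next
    case False
    have "W\<^sup>2 - k\<^sup>2 \<le> 2*pq*k" using assms(7) unfolding assms(6) by (simp add: power2_eq_square algebra_simps)
    hence "4*A*k + k\<^sup>2 - W\<^sup>2 \<ge> k*(4*A - 2*pq)" by (simp add: algebra_simps)
    moreover have "k*(4*A - 2*pq) \<ge> 0" using k0 assms by simp
    ultimately have h1: "4*A*k + k\<^sup>2 - W\<^sup>2 \<ge> 0" by linarith
    have "hh*(k\<^sup>2 - W\<^sup>2) \<ge> (W/2)*(k\<^sup>2 - W\<^sup>2)"
      using False assms by (intro mult_right_mono_neg) auto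
    moreover have "2*W*A*k + (W/2)*(k\<^sup>2 - W\<^sup>2) = (W/2)*(4*A*k + k\<^sup>2 - W\<^sup>2)"
      by (simp add: algebra_simps)
    moreover have "(W/2)*(4*A*k + k\<^sup>2 - W\<^sup>2) \<ge> 0" using h1 assms by simp
    ultimately show ?thesis by linarith
  qed
  have "(W*A + hh*k)\<^sup>2 - W\<^sup>2 * (A\<^sup>2 + hh\<^sup>2) = hh * (2*W*A*k + hh*(k\<^sup>2 - W\<^sup>2))"
    by (simp add: power2_eq_square algebra_simps)
  moreover have "hh * (2*W*A*k + hh*(k\<^sup>2 - W\<^sup>2)) \<ge> 0" using G assms by simp
  ultimately show ?thesis by linarith
qed

lemma lagrange2:
  fixes u1 u2 v1 v2 :: real
  shows "(u1 * v2 - u2 * v1)\<^sup>2 \<le> (u1\<^sup>2 + u2\<^sup>2) * (v1\<^sup>2 + v2\<^sup>2)"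
proof -
  have "(u1\<^sup>2 + u2\<^sup>2) * (v1\<^sup>2 + v2\<^sup>2) - (u1 * v2 - u2 * v1)\<^sup>2 = (u1 * v1 + u2 * v2)\<^sup>2"
    by (simp add: power2_eq_square algebra_simps)
  thus ?thesis by (smt (verit) zero_le_power2)
qed

theorem lemma6:
  fixes a b c d z :: "real \<times> real" and x0 y0 W t :: real
  defines "Q \<equiv> convex hull {a, b, c, d}"
  defines "m1 \<equiv> midpoint a b"
  assumes quad: "convex_quad_cw a b c d"
    and horiz: "snd a = snd c"
    and len_ac: "dist a c = 1"
    and diam: "diameter Q = 1"
    and W_bounds: "2 / sqrt 5 < W" "W \<le> 1"
    and box: "Q \<subseteq> {x0..x0 + 1} \<times> {y0..y0 + W}"
    and a_left: "fst a = x0" "y0 \<le> snd a" "snd a \<le> y0 + W"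
    and b_top: "snd b = y0 + W" "x0 \<le> fst b" "fst b \<le> x0 + 1"
    and c_right: "fst c = x0 + 1" "y0 \<le> snd c" "snd c \<le> y0 + W"
    and d_bottom: "snd d = y0" "x0 \<le> fst d" "fst d \<le> x0 + 1"
    and ac_low: "snd a \<le> y0 + W / 2"
    and b_right: "fst b > x0 + 1 / 2"
    and t_pos: "t > 0"
    and z_def: "z = m1 + t *\<^sub>R rnormal (b - a)"
    and z_bd: "z \<in> frontier Q"
    and z_cd: "z \<in> closed_segment c d"
  shows "dist m1 z \<ge> W / 2"
proof -
  have W0: "W > 0" using W_bounds(1) by (smt (verit) divide_pos_pos real_sqrt_gt_zero)
  have bQ: "bounded Q" unfolding Q_def
    by (intro compact_imp_bounded compact_convex_hull) simp
  have "b \<in> Q" "d \<in> Q" unfolding Q_def by (auto intro: hull_inc)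
  hence bd: "dist b d \<le> 1" using diameter_bounded_bound[OF bQ] diam by metis
  obtain a1 a2 where a: "a = (a1,a2)" by force
  obtain b1 b2 where b: "b = (b1,b2)" by force
  obtain c1 c2 where c: "c = (c1,c2)" by force
  obtain d1 d2 where d: "d = (d1,d2)" by force
  obtain z1 z2 where zz: "z = (z1,z2)" by force
  obtain u where u: "z = (1-u) *\<^sub>R c + u *\<^sub>R d" using z_cd unfolding closed_segment_def by blast
  have z1: "z1 = (1-u)*c1 + u*d1" and z2: "z2 = (1-u)*c2 + u*d2" using u zz c d by auto
  have m1: "m1 = ((a1+b1)/2, (a2+b2)/2)" unfolding m1_def midpoint_def a b by (simp add: field_simps)
  have coords: "a1 = x0" "b2 = y0 + W" "c1 = x0+1" "c2 = a2" "d2 = y0"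
    using a_left b_top c_right d_bottom horiz a b c d by auto
  have bd2: "(b1-d1)\<^sup>2 + W\<^sup>2 \<le> 1"
  proof -
    have "dist b d = sqrt ((b1-d1)\<^sup>2 + (W)\<^sup>2)"
      using coords unfolding b d by (simp add: dist_Pair_Pair dist_real_def)
    with bd show ?thesis by (smt (verit) real_sqrt_le_1_iff)
  qed
  define A where "A = x0 + 1 - d1"
  define hh where "hh = a2 - y0"
  define k where "k = 1 - (b1 - d1)"
  have key: "(W*A + hh*k)\<^sup>2 \<ge> W\<^sup>2 * (A\<^sup>2 + hh\<^sup>2)"
    apply (rule key_poly[where pq="b1-d1"])
    using a_left b_top d_bottom ac_low W0 W_bounds bd2 a b d
    by (auto simp: A_def hh_def k_def)
  define D2 where "D2 = ((a1+b1)/2 - z1)\<^sup>2 + ((a2+b2)/2 - z2)\<^sup>2"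
  have crs: "(W*A + hh*k)\<^sup>2 \<le> 4 * ((A\<^sup>2 + hh\<^sup>2) * D2)"
  proof -
    have e: "W*A + hh*k = 2*(A*((a2+b2)/2 - z2) - hh*((a1+b1)/2 - z1))"
      unfolding A_def hh_def k_def z1 z2 coords by (simp add: field_simps)
    define X where "X = (a1+b1)/2 - z1"
    define Y where "Y = (a2+b2)/2 - z2"
    have L: "(A * Y - hh * X)\<^sup>2 \<le> (A\<^sup>2 + hh\<^sup>2) * (X\<^sup>2 + Y\<^sup>2)"
      using lagrange2[of A Y hh X] by (simp add: power2_eq_square algebra_simps)
    have "(2*(A * Y - hh * X))\<^sup>2 = 4 * (A * Y - hh * X)\<^sup>2" by (simp add: power2_eq_square algebra_simps)
    also have "\<dots> \<le> 4 * ((A\<^sup>2 + hh\<^sup>2) * (X\<^sup>2 + Y\<^sup>2))" using L by simp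
    finally show ?thesis unfolding e D2_def X_def[symmetric] Y_def[symmetric] by simp
  qed
  have Lpos: "A\<^sup>2 + hh\<^sup>2 > 0"
  proof (rule ccontr)
    assume "\<not> ?thesis"
    hence "A\<^sup>2 + hh\<^sup>2 = 0" by (smt (verit) zero_le_power2)
    hence "A = 0" "hh = 0" by (simp_all add: sum_power2_eq_zero_iff)
    hence "c = d" using coords c d by (simp add: A_def hh_def)
    thus False using quad unfolding convex_quad_cw_def right_turn_def cross_def by simp
  qed
  have "W\<^sup>2 * (A\<^sup>2 + hh\<^sup>2) \<le> (4*D2) * (A\<^sup>2 + hh\<^sup>2)" using key crs by (simp add: algebra_simps)
  hence "W\<^sup>2 \<le> 4*D2" using Lpos by simp
  hence "(W/2)\<^sup>2 \<le> D2" by (simp add: power_divide)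
  hence "sqrt ((W/2)\<^sup>2) \<le> sqrt D2" by (rule real_sqrt_le_mono)
  moreover have "sqrt ((W/2)\<^sup>2) = W/2" using W0 by simp
  moreover have "dist m1 z = sqrt D2" unfolding m1 zz D2_def
    by (simp add: dist_Pair_Pair dist_real_def)
  ultimately show ?thesis by simp
qed

end
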